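(* Let $p$ be a prime, $g$ a generator of $U(\mathbb Z/p\mathbb Z)$, $n\ge 1$ an integer, $\varphi=\cos\frac{2\pi}{p-1}+i\sin\frac{2\pi}{p-1}$ and $\omega=\cos\frac{2\pi}{n}+i\sin\frac{2\pi}{n}$. For $1\le k\le n$ let $\beta_{1k}\in\mathbb R$ and $\beta_{2k}\ge 0$, with $\beta_{11}\ge\beta_{21}\ge 0$, and let $\mathcal B_k=\{\beta_{1k},\beta_{2k},\beta_{2k}\varphi,\dots,\beta_{2k}\varphi^{p-2}\}$ (with multiplicities), and $\mathcal B=\bigcup_{k=1}^n\mathcal B_k$. Let $S_1,\dots,S_n$ be real $g$-circulant matrices of order $p$ with spectrum $\Sigma(S_k)=\mathcal B_k$ for each $k$. Suppose that $\mathcal B_{n+2-k}=\overline{\mathcal B_k}$ for $2\le k\le n$, and that $$L_k=\frac1n\sum_{\ell=1}^n S_\ell\,\omega^{-(k-1)(\ell-1)}\ \ge 0\quad\text{(entrywise) for all }1\le k\le n.$$ Then $\mathcal B$ is the spectrum of a nonnegative $g$-circulant matrix by blocks (of order $pn$, with $p\times p$ blocks of order $n$).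
   Context: A $g$-circulant matrix of order $p$ is a matrix whose $(i,j)$ entry is $a_{j-(i-1)g}$ for its first row $(a_1,\dots,a_p)$ (subscripts modulo $p$). A block matrix $A=(A_{ij})_{1\le i,j\le p}$ with each block of size $n\times n$ is a $g$-circulant matrix by blocks if $A_{ij}=A_{i+1,j+g}$ for all $1\le i,j\le p$, subscripts taken modulo $p$; equivalently $A=g\text{-}circ(A_1,\dots,A_p)$ with block $(i,j)$ equal to $A_{j-(i-1)g}$. *)

theory Defs
  imports "Jordan_Normal_Form.Jordan_Normal_Form" "HOL-Number_Theory.Residue_Primitive_Roots"
begin

definition spec_mset :: "complex mat \<Rightarrow> complex multiset" where
  "spec_mset A = proots (char_poly A)"

definition rspec :: "real mat \<Rightarrow> complex multiset" where
  "rspec A = spec_mset (map_mat complex_of_real A)"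

text \<open>g-circulant matrix of order p (0-indexed): entry (i,j) is a((j - i g) mod p),
  i.e. 1-indexed entry (i,j) is a_{j-(i-1)g} for the first row a.\<close>
definition g_circulant :: "nat \<Rightarrow> nat \<Rightarrow> 'a mat \<Rightarrow> bool" where
  "g_circulant p g A \<longleftrightarrow> A \<in> carrier_mat p p \<and>
     (\<exists>a :: nat \<Rightarrow> 'a. \<forall>i<p. \<forall>j<p. A $$ (i, j) = a (nat ((int j - int i * int g) mod int p)))"

text \<open>g-circulant by blocks: a p x p arrangement of n x n blocks A_ij (0-indexed, block (i,j)
  occupies rows i*n.. and columns j*n..) with A_ij = A_{i+1,j+g}, indices mod p.\<close>
definition g_circulant_blocks :: "nat \<Rightarrow> nat \<Rightarrow> nat \<Rightarrow> 'a mat \<Rightarrow> bool" where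
  "g_circulant_blocks p n g A \<longleftrightarrow> A \<in> carrier_mat (p*n) (p*n) \<and>
     (\<forall>i<p. \<forall>j<p. \<forall>a<n. \<forall>b<n.
        A $$ (((i+1) mod p) * n + a, ((j+g) mod p) * n + b) = A $$ (i*n + a, j*n + b))"

definition Bk :: "nat \<Rightarrow> real \<Rightarrow> real \<Rightarrow> complex multiset" where
  "Bk p b1 b2 = {# complex_of_real b1 #} +
     mset (map (\<lambda>j. complex_of_real b2 * cis (2*pi / real (p-1)) ^ j) [0..<p-1])"

end

theory Submission
  imports Defs "Jordan_Normal_Form.Schur_Decomposition"
begin

definition blockdiag :: "nat \<Rightarrow> (nat \<Rightarrow> complex mat) \<Rightarrow> nat \<Rightarrow> complex mat" where
  "blockdiag p T m = mat (m*p) (m*p) (\<lambda>(y,z). if y div p = z div p then T (y div p) $$ (y mod p, z mod p) else 0)"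

lemma blockdiag_Suc:
  assumes "p > 0" "T m \<in> carrier_mat p p"
  shows "blockdiag p T (Suc m) = four_block_mat (blockdiag p T m) (0\<^sub>m (m*p) p) (0\<^sub>m p (m*p)) (T m)"
proof (rule eq_matI)
  fix i j assume ij: "i < dim_row (four_block_mat (blockdiag p T m) (0\<^sub>m (m*p) p) (0\<^sub>m p (m*p)) (T m))"
     "j < dim_col (four_block_mat (blockdiag p T m) (0\<^sub>m (m*p) p) (0\<^sub>m p (m*p)) (T m))"
  then have i: "i < m*p + p" and j: "j < m*p+p" using assms by (auto simp: blockdiag_def)
  have d1: "x < m*p \<Longrightarrow> x div p < m" for x using assms by (simp add: less_mult_imp_div_less)
  have d2: "\<not> x < m*p \<Longrightarrow> x < m*p+p \<Longrightarrow> x div p = m" for x using assms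
    by (metis add.commute div_nat_eqI linorder_not_le mult.commute mult_Suc_right)
  have d3: "x mod p = x - m*p" if "\<not> x < m*p" "x < m*p+p" for x
  proof -
    have e: "x = (x - m*p) + m*p" using that by simp
    have "x mod p = (x - m*p) mod p" by (subst e) simp
    also have "\<dots> = x - m*p" using that by simp
    finally show ?thesis .
  qed
  have L: "four_block_mat (blockdiag p T m) (0\<^sub>m (m*p) p) (0\<^sub>m p (m*p)) (T m) $$ (i, j) =
     (if i < m*p then if j < m*p then blockdiag p T m $$ (i,j) else 0
      else if j < m*p then 0 else T m $$ (i - m*p, j - m*p))"
    using i j assms by (subst index_mat_four_block) (auto simp: blockdiag_def)
  have R: "blockdiag p T (Suc m) $$ (i, j) = (if i div p = j div p then T (i div p) $$ (i mod p, j mod p) else 0)"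
    using i j by (simp add: blockdiag_def add.commute)
  show "blockdiag p T (Suc m) $$ (i, j) = four_block_mat (blockdiag p T m) (0\<^sub>m (m*p) p) (0\<^sub>m p (m*p)) (T m) $$ (i, j)"
  proof (cases "i < m*p")
    case ci: True
    show ?thesis
    proof (cases "j < m*p")
      case True then show ?thesis unfolding L R using ci by (simp add: blockdiag_def)
    next
      case False then show ?thesis unfolding L R using ci d1[of i] d2[of j] j by simp
    qed
  next
    case ci: False
    show ?thesis
    proof (cases "j < m*p")
      case True then show ?thesis unfolding L R using ci d1[of j] d2[of i] i by simp
    next
      case False then show ?thesis unfolding L R using ci d2[of j] d2[of i] d3[of i] d3[of j] i j by simp
    qed
  qed
qed (use assms in \<open>auto simp: blockdiag_def\<close>)

lemma blockdiag_carrier: "blockdiag p T m \<in> carrier_mat (m*p) (m*p)"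
  by (simp add: blockdiag_def)

lemma char_poly_blockdiag:
  assumes "p > 0" "\<And>b. b < m \<Longrightarrow> T b \<in> carrier_mat p p"
  shows "char_poly (blockdiag p T m) = (\<Prod>b<m. char_poly (T b))"
  using assms(2)
proof (induction m)
  case 0
  then show ?case by (simp add: char_poly_def char_poly_matrix_def blockdiag_def)
next
  case (Suc m)
  have T: "T m \<in> carrier_mat p p" using Suc by auto
  have c1: "\<exists>es. char_poly (blockdiag p T m) = (\<Prod>a\<leftarrow>es. [:- a, 1:])"
    using char_poly_factorized[OF blockdiag_carrier[of p T m]] by blast
  have c2: "\<exists>es. char_poly (T m) = (\<Prod>a\<leftarrow>es. [:- a, 1:])"
    using char_poly_factorized[OF T] by blast
  have "char_poly (blockdiag p T (Suc m)) = char_poly (blockdiag p T m) * char_poly (T m)"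
    by (rule char_poly_0_block[OF blockdiag_Suc[where T=T and m=m, OF assms(1) T] c1 c2 blockdiag_carrier _ T]) simp
  then show ?case using Suc by simp
qed

lemma sum_split_mult:
  fixes f :: "nat \<Rightarrow> 'a::comm_monoid_add"
  shows "(\<Sum>x<p*n. f x) = (\<Sum>i<p. \<Sum>a<n. f (i*n+a))"
proof (induction p)
  case 0 then show ?case by simp
next
  case (Suc p)
  have "(\<Sum>x<Suc p*n. f x) = (\<Sum>x<p*n. f x) + (\<Sum>x\<in>{p*n..<p*n+n}. f x)"
    by (simp add: add.commute sum.atLeastLessThan_concat[symmetric] lessThan_atLeast0)
  also have "(\<Sum>x\<in>{p*n..<p*n+n}. f x) = (\<Sum>a<n. f (p*n+a))"
    by (rule sum.reindex_bij_witness[of _ "\<lambda>a. p*n+a" "\<lambda>x. x - p*n"]) auto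
  finally show ?case using Suc by simp
qed

lemma root_pow_mod: "(z::complex) ^ n = 1 \<Longrightarrow> z ^ m = z ^ (m mod n)"
  by (metis mod_mult_div_eq mult.commute power_add power_mult power_one mult_1_right)

lemma w_pow: "cis (2*pi / real n) ^ k = cis (2*pi*real k / real n)"
  by (simp add: DeMoivre mult_ac)

lemma w_n: "n > 0 \<Longrightarrow> cis (2*pi / real n) ^ n = 1"
  by (simp add: DeMoivre)

lemma orth:
  assumes n: "n > 0" and a: "a < n" and b: "b < n"
  shows "(\<Sum>c<n. cis (2*pi / real n) ^ (a*c) * inverse (cis (2*pi / real n)) ^ (b*c)) = (if a = b then of_nat n else 0)"
proof -
  define w where "w = cis (2*pi / real n)"
  have w0: "w \<noteq> 0" by (simp add: w_def)
  define z where "z = w^a * inverse w ^ b"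
  have eq: "w ^ (a*c) * inverse w ^ (b*c) = z ^ c" for c
    by (simp add: z_def power_mult power_mult_distrib)
  have se: "(\<Sum>c<n. w ^ (a*c) * inverse w ^ (b*c)) = (\<Sum>c<n. z^c)"
    using eq by simp
  have "(\<Sum>c<n. z^c) = (if a = b then of_nat n else 0)"
  proof (cases "a = b")
    case True
    then have "z = 1" using w0 by (simp add: z_def power_inverse)
    then show ?thesis using True by simp
  next
    case False
    have wn: "w^n = 1" using w_n[OF n] by (simp add: w_def)
    have zn: "z^n = 1" unfolding z_def power_mult_distrib
      by (simp add: power_mult[symmetric] mult.commute[of _ n] power_mult wn power_inverse)
    have "cis (2*pi*real a/real n) \<noteq> cis (2*pi*real b/real n)"
      using inj_onD[OF bij_betw_imp_inj_on[OF bij_betw_roots_unity[OF n]], of a b] a b False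
      by auto
    then have "w^a \<noteq> w^b" unfolding w_def w_pow .
    then have z1: "z \<noteq> 1" using w0 by (auto simp: z_def power_inverse field_simps)
    have "(\<Sum>c<n. z^c) = 0"
      using z1 zn by (simp add: geometric_sum)
    then show ?thesis using False by simp
  qed
  then show ?thesis using se by (simp add: w_def)
qed

definition Pm :: "nat \<Rightarrow> nat \<Rightarrow> complex \<Rightarrow> complex mat" where
  "Pm n p w = mat (p*n) (p*n) (\<lambda>(x,y). if x div n = y mod p then w^((x mod n)*(y div p)) else 0)"
definition Qm :: "nat \<Rightarrow> nat \<Rightarrow> complex \<Rightarrow> complex mat" where
  "Qm n p w = mat (p*n) (p*n) (\<lambda>(y,x). if x div n = y mod p then (inverse w)^((x mod n)*(y div p)) / of_nat n else 0)"

lemma divmod_facts: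
  fixes x p n :: nat
  assumes "x < p*n"
  shows "x div n < p" "x mod n < n" "x div p < n" "x mod p < p"
proof -
  have n: "n > 0" using assms by (metis mult_0_right not_less_zero neq0_conv)
  have p: "p > 0" using assms by (metis mult_0 not_less_zero neq0_conv)
  show "x div n < p" "x div p < n" using assms by (auto simp: less_mult_imp_div_less mult.commute[of p n])
  show "x mod n < n" "x mod p < p" using n p by auto
qed

lemma PQ:
  assumes n: "n > 0" and p: "p > 0"
    and orthw: "\<And>a b. a < n \<Longrightarrow> b < n \<Longrightarrow> (\<Sum>c<n. w^(a*c) * inverse w^(b*c)) = (if a = b then of_nat n else 0)"
  shows "Pm n p w * Qm n p w = 1\<^sub>m (p*n)"
proof (rule eq_matI)
  let ?w = w
  fix x x' assume "x < dim_row (1\<^sub>m (p*n))" "x' < dim_col (1\<^sub>m (p*n))"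
  then have x: "x < p*n" and x': "x' < p*n" by auto
  have "(Pm n p ?w * Qm n p ?w) $$ (x,x') = (\<Sum>y<n*p. Pm n p ?w $$ (x,y) * Qm n p ?w $$ (y,x'))"
    using x x' by (simp add: Pm_def Qm_def scalar_prod_def lessThan_atLeast0 mult.commute[of p n])
  also have "\<dots> = (\<Sum>b<n. \<Sum>j<p. Pm n p ?w $$ (x,b*p+j) * Qm n p ?w $$ (b*p+j,x'))"
    by (rule sum_split_mult)
  also have "\<dots> = (\<Sum>b<n. \<Sum>j<p. if x div n = j \<and> x' div n = j then ?w^((x mod n)*b) * (inverse ?w)^((x' mod n)*b) / of_nat n else 0)"
  proof (intro sum.cong refl)
    fix b j assume b: "b \<in> {..<n}" and j: "j \<in> {..<p}"
    have bj1: "b*p+j < Suc b*p" using j by simp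
    have bj2: "Suc b*p \<le> n*p" using b by (intro mult_le_mono1) simp
    have bj: "b*p+j < p*n" using bj1 bj2 by (simp add: mult.commute)
    have d: "(b*p+j) div p = b" "(b*p+j) mod p = j" using j p by auto
    show "Pm n p ?w $$ (x,b*p+j) * Qm n p ?w $$ (b*p+j,x') = (if x div n = j \<and> x' div n = j then ?w^((x mod n)*b) * (inverse ?w)^((x' mod n)*b) / of_nat n else 0)"
      using x x' bj d by (simp add: Pm_def Qm_def)
  qed
  also have "\<dots> = (\<Sum>b<n. if x div n = x' div n then ?w^((x mod n)*b) * (inverse ?w)^((x' mod n)*b) / of_nat n else 0)"
    using divmod_facts[OF x] by (intro sum.cong refl) (auto simp: sum.delta)
  also have "\<dots> = 1\<^sub>m (p*n) $$ (x,x')"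
  proof (cases "x div n = x' div n")
    case True
    have "(\<Sum>b<n. ?w^((x mod n)*b) * (inverse ?w)^((x' mod n)*b) / of_nat n) = 
       (\<Sum>b<n. ?w^((x mod n)*b) * (inverse ?w)^((x' mod n)*b)) / of_nat n"
      by (simp add: sum_divide_distrib)
    also have "\<dots> = (if x mod n = x' mod n then 1 else 0)"
      using orthw[of "x mod n" "x' mod n"] n divmod_facts[OF x] divmod_facts[OF x'] by simp
    finally have S: "(\<Sum>b<n. ?w^((x mod n)*b) * (inverse ?w)^((x' mod n)*b) / of_nat n) = (if x mod n = x' mod n then 1 else 0)" .
    have E: "x = x' \<longleftrightarrow> x mod n = x' mod n"
      using True div_mult_mod_eq[of x n] div_mult_mod_eq[of x' n] by metis
    show ?thesis using S E True x x' by (simp del: One_nat_def)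
  next
    case False
    then have "x \<noteq> x'" by auto
    then show ?thesis using False x x' by simp
  qed
  finally show "(Pm n p ?w * Qm n p ?w) $$ (x,x') = 1\<^sub>m (p*n) $$ (x,x')" .
qed (auto simp: Pm_def Qm_def)


lemma QP:
  assumes n: "n > 0" and p: "p > 0"
    and orthw: "\<And>a b. a < n \<Longrightarrow> b < n \<Longrightarrow> (\<Sum>c<n. w^(a*c) * inverse w^(b*c)) = (if a = b then of_nat n else 0)"
  shows "Qm n p w * Pm n p w = 1\<^sub>m (p*n)"
proof (rule eq_matI)
  let ?w = w
  fix y y' assume "y < dim_row (1\<^sub>m (p*n))" "y' < dim_col (1\<^sub>m (p*n))"
  then have y: "y < p*n" and y': "y' < p*n" by auto
  have "(Qm n p ?w * Pm n p ?w) $$ (y,y') = (\<Sum>x<p*n. Qm n p ?w $$ (y,x) * Pm n p ?w $$ (x,y'))"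
    using y y' by (simp add: Pm_def Qm_def scalar_prod_def lessThan_atLeast0)
  also have "\<dots> = (\<Sum>i<p. \<Sum>a<n. Qm n p ?w $$ (y,i*n+a) * Pm n p ?w $$ (i*n+a,y'))"
    by (rule sum_split_mult)
  also have "\<dots> = (\<Sum>i<p. \<Sum>a<n. if y mod p = i \<and> y' mod p = i then ?w^((y' div p)*a) * (inverse ?w)^((y div p)*a) / of_nat n else 0)"
  proof (intro sum.cong refl)
    fix i a assume i: "i \<in> {..<p}" and a: "a \<in> {..<n}"
    have bj1: "i*n+a < Suc i*n" using a by simp
    have bj2: "Suc i*n \<le> p*n" using i by (intro mult_le_mono1) simp
    have bj: "i*n+a < p*n" using bj1 bj2 by simp
    have d: "(i*n+a) div n = i" "(i*n+a) mod n = a" using a n by auto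
    show "Qm n p ?w $$ (y,i*n+a) * Pm n p ?w $$ (i*n+a,y') = (if y mod p = i \<and> y' mod p = i then ?w^((y' div p)*a) * (inverse ?w)^((y div p)*a) / of_nat n else 0)"
      using y y' bj d by (auto simp: Pm_def Qm_def mult.commute)
  qed
  also have "\<dots> = (\<Sum>a<n. if y mod p = y' mod p then ?w^((y' div p)*a) * (inverse ?w)^((y div p)*a) / of_nat n else 0)"
    using divmod_facts[OF y] by (subst sum.swap) (intro sum.cong refl, auto simp: sum.delta)
  also have "\<dots> = 1\<^sub>m (p*n) $$ (y,y')"
  proof (cases "y mod p = y' mod p")
    case True
    have "(\<Sum>a<n. ?w^((y' div p)*a) * (inverse ?w)^((y div p)*a) / of_nat n) = 
       (\<Sum>a<n. ?w^((y' div p)*a) * (inverse ?w)^((y div p)*a)) / of_nat n"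
      by (simp add: sum_divide_distrib)
    also have "\<dots> = (if y' div p = y div p then 1 else 0)"
      using orthw[of "y' div p" "y div p"] n divmod_facts[OF y] divmod_facts[OF y'] by simp
    finally have S: "(\<Sum>a<n. ?w^((y' div p)*a) * (inverse ?w)^((y div p)*a) / of_nat n) = (if y' div p = y div p then 1 else 0)" .
    have E: "y = y' \<longleftrightarrow> y' div p = y div p"
      using True div_mult_mod_eq[of y p] div_mult_mod_eq[of y' p] by metis
    show ?thesis using S E True y y' by (simp del: One_nat_def)
  next
    case False
    then have "y \<noteq> y'" by auto
    then show ?thesis using False y y' by simp
  qed
  finally show "(Qm n p ?w * Pm n p ?w) $$ (y,y') = 1\<^sub>m (p*n) $$ (y,y')" .
qed (auto simp: Pm_def Qm_def)

lemma PD: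
  assumes n: "n > 0" and p: "p > 0" and x: "x < p*n" and z: "z < p*n"
  shows "(Pm n p w * blockdiag p T n) $$ (x,z) = w^((x mod n)*(z div p)) * T (z div p) $$ (x div n, z mod p)"
proof -
  have "(Pm n p w * blockdiag p T n) $$ (x,z) = (\<Sum>y<n*p. Pm n p w $$ (x,y) * blockdiag p T n $$ (y,z))"
    using x z by (simp add: Pm_def blockdiag_def scalar_prod_def lessThan_atLeast0 mult.commute[of p n])
  also have "\<dots> = (\<Sum>b<n. \<Sum>j<p. Pm n p w $$ (x,b*p+j) * blockdiag p T n $$ (b*p+j,z))"
    by (rule sum_split_mult)
  also have "\<dots> = (\<Sum>b<n. \<Sum>j<p. if x div n = j \<and> b = z div p then w^((x mod n)*b) * T b $$ (j, z mod p) else 0)"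
  proof (intro sum.cong refl)
    fix b j assume b: "b \<in> {..<n}" and j: "j \<in> {..<p}"
    have bj1: "b*p+j < Suc b*p" using j by simp
    have bj2: "Suc b*p \<le> n*p" using b by (intro mult_le_mono1) simp
    have bj: "b*p+j < p*n" using bj1 bj2 by (simp add: mult.commute)
    have d: "(b*p+j) div p = b" "(b*p+j) mod p = j" using j p by auto
    show "Pm n p w $$ (x,b*p+j) * blockdiag p T n $$ (b*p+j,z) = (if x div n = j \<and> b = z div p then w^((x mod n)*b) * T b $$ (j, z mod p) else 0)"
      using x z bj d by (auto simp: Pm_def blockdiag_def mult.commute[of p n])
  qed
  also have "\<dots> = (\<Sum>b<n. if b = z div p then w^((x mod n)*b) * T b $$ (x div n, z mod p) else 0)"
  proof (intro sum.cong refl)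
    fix b assume "b \<in> {..<n}"
    show "(\<Sum>j<p. if x div n = j \<and> b = z div p then w^((x mod n)*b) * T b $$ (j, z mod p) else 0) =
      (if b = z div p then w^((x mod n)*b) * T b $$ (x div n, z mod p) else 0)"
      using divmod_facts[OF x] by (cases "b = z div p") (simp_all add: sum.delta)
  qed
  also have "\<dots> = w^((x mod n)*(z div p)) * T (z div p) $$ (x div n, z mod p)"
    using divmod_facts[OF z] by (simp add: sum.delta')
  finally show ?thesis .
qed

lemma PDQ:
  assumes n: "n > 0" and p: "p > 0" and x: "x < p*n" and x': "x' < p*n"
  shows "(Pm n p w * blockdiag p T n * Qm n p w) $$ (x,x') =
     (\<Sum>b<n. w^((x mod n)*b) * T b $$ (x div n, x' div n) * (inverse w)^((x' mod n)*b)) / of_nat n"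
proof -
  have "(Pm n p w * blockdiag p T n * Qm n p w) $$ (x,x') = (\<Sum>z<n*p. (Pm n p w * blockdiag p T n) $$ (x,z) * Qm n p w $$ (z,x'))"
    using x x' by (simp add: Pm_def Qm_def blockdiag_def scalar_prod_def lessThan_atLeast0 mult.commute[of p n])
  also have "\<dots> = (\<Sum>b<n. \<Sum>j<p. (Pm n p w * blockdiag p T n) $$ (x,b*p+j) * Qm n p w $$ (b*p+j,x'))"
    by (rule sum_split_mult)
  also have "\<dots> = (\<Sum>b<n. \<Sum>j<p. if x' div n = j then w^((x mod n)*b) * T b $$ (x div n, j) * (inverse w)^((x' mod n)*b) / of_nat n else 0)"
  proof (intro sum.cong refl)
    fix b j assume b: "b \<in> {..<n}" and j: "j \<in> {..<p}"
    have bj1: "b*p+j < Suc b*p" using j by simp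
    have bj2: "Suc b*p \<le> n*p" using b by (intro mult_le_mono1) simp
    have bj: "b*p+j < p*n" using bj1 bj2 by (simp add: mult.commute)
    have d: "(b*p+j) div p = b" "(b*p+j) mod p = j" using j p by auto
    show "(Pm n p w * blockdiag p T n) $$ (x,b*p+j) * Qm n p w $$ (b*p+j,x') = (if x' div n = j then w^((x mod n)*b) * T b $$ (x div n, j) * (inverse w)^((x' mod n)*b) / of_nat n else 0)"
      using x x' bj d by (auto simp: PD[OF n p x bj] Qm_def mult.commute)
  qed
  also have "\<dots> = (\<Sum>b<n. w^((x mod n)*b) * T b $$ (x div n, x' div n) * (inverse w)^((x' mod n)*b) / of_nat n)"
    using divmod_facts[OF x'] by (simp add: sum.delta sum.delta')
  also have "\<dots> = (\<Sum>b<n. w^((x mod n)*b) * T b $$ (x div n, x' div n) * (inverse w)^((x' mod n)*b)) / of_nat n"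
    by (simp add: sum_divide_distrib)
  finally show ?thesis .
qed



lemma exp_cong:
  fixes a a' b n :: nat
  assumes n: "n > 0" and a: "a < n"
  shows "((n-1)*(a*b) + a'*b) mod n = (((a'+n-a) mod n)*b) mod n"
proof -
  have na: "n*a = a + (n-1)*a" using n by (cases n) simp_all
  have e: "(n-1)*a + a' + n = (a' + n - a) + n*a" unfolding na using a by linarith
  have "((n-1)*a + a') mod n = ((n-1)*a + a' + n) mod n" by (simp only: mod_add_self2)
  also have "\<dots> = ((a' + n - a) + n*a) mod n" by (simp only: e)
  also have "\<dots> = (a' + n - a) mod n" by (simp only: mod_mult_self2)
  finally have m1: "((n-1)*a + a') mod n = (a' + n - a) mod n" .
  have "((n-1)*(a*b) + a'*b) = ((n-1)*a + a')*b" by (simp only: add_mult_distrib mult.assoc)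
  then have "((n-1)*(a*b) + a'*b) mod n = (((n-1)*a + a') mod n * b) mod n" by (simp only: mod_mult_left_eq)
  also have "\<dots> = (((a'+n-a) mod n)*b) mod n" by (simp only: m1)
  finally show ?thesis .
qed

lemma expo:
  fixes w :: complex
  assumes n: "n > 0" and wn: "w^n = 1" and a: "a < n"
  shows "w^(a*b) * inverse w^(a'*b) = inverse w^(((a' + n - a) mod n)*b)"
proof -
  define v where "v = inverse w"
  have w0: "w \<noteq> 0"
  proof
    assume "w = 0" then have "w^n = 0" using n by simp
    with wn show False by (metis zero_neq_one)
  qed
  have vn: "v^n = 1" unfolding v_def power_inverse wn by simp
  obtain m where m: "n = Suc m" using n by (cases n) auto
  have vm: "v^m * v = 1"
  proof -
    have "v^m * v = v^Suc m" by (rule power_Suc2[symmetric])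
    also have "\<dots> = 1" using vn m by simp
    finally show ?thesis .
  qed
  have wv: "w = v^(n-1)"
  proof -
    have "v^m = v^m * (v * w)" using w0 by (simp add: v_def)
    also have "\<dots> = (v^m * v) * w" by (simp only: mult.assoc)
    also have "\<dots> = w" using vm by simp
    finally show ?thesis using m by simp
  qed
  have "w^(a*b) * v^(a'*b) = v^((n-1)*(a*b) + a'*b)" by (simp only: wv power_mult[symmetric] power_add)
  also have "\<dots> = v^(((n-1)*(a*b) + a'*b) mod n)" by (rule root_pow_mod[OF vn])
  also have "\<dots> = v^((((a'+n-a) mod n)*b) mod n)" by (simp only: exp_cong[OF n a])
  also have "\<dots> = v^(((a'+n-a) mod n)*b)" by (rule root_pow_mod[OF vn, symmetric])
  finally show ?thesis unfolding v_def .
qed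



lemma circ_idx:
  fixes i j g p :: nat
  shows "(int ((j+g) mod p) - int ((i+1) mod p) * int g) mod int p = (int j - int i * int g) mod int p"
proof -
  have "(int ((j+g) mod p) - int ((i+1) mod p) * int g) mod int p
      = ((int j + int g) mod int p - ((int i + 1) mod int p) * int g) mod int p"
    by (simp only: of_nat_mod of_nat_add of_nat_1)
  also have "\<dots> = ((int j + int g) mod int p - (((int i + 1) mod int p) * int g) mod int p) mod int p"
    by (rule mod_diff_right_eq[symmetric])
  also have "(((int i + 1) mod int p) * int g) mod int p = ((int i + 1) * int g) mod int p"
    by (rule mod_mult_left_eq)
  also have "((int j + int g) mod int p - ((int i + 1) * int g) mod int p) mod int p = ((int j + int g) - (int i + 1) * int g) mod int p"
    by (rule mod_diff_eq)
  also have "(int j + int g) - (int i + 1) * int g = int j - int i * int g"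
    by (simp add: algebra_simps)
  finally show ?thesis .
qed

lemma sum_shift1: "(\<Sum>l=1..n. f l) = (\<Sum>b<n. f (Suc b))"
  by (rule sum.reindex_bij_witness[of _ Suc "\<lambda>l. l - 1"]) auto

lemma idx_facts:
  fixes i a p n :: nat
  assumes "i < p" "a < n"
  shows "(i*n+a) div n = i" "(i*n+a) mod n = a" "i*n+a < p*n"
proof -
  show "(i*n+a) div n = i" "(i*n+a) mod n = a" using assms by auto
  have "i*n+a < Suc i*n" using assms by simp
  also have "Suc i*n \<le> p*n" using assms by (intro mult_le_mono1) simp
  finally show "i*n+a < p*n" .
qed

theorem mainTheorem11:
  fixes p g n :: nat and b1 b2 :: "nat \<Rightarrow> real" and S :: "nat \<Rightarrow> real mat"
  assumes "prime p"
    and "residue_primroot p g"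
    and "n \<ge> 1"
    and "\<forall>k\<in>{1..n}. b2 k \<ge> 0"
    and "b1 1 \<ge> b2 1" and "b2 1 \<ge> 0"
    and "\<forall>k\<in>{1..n}. g_circulant p g (S k) \<and> rspec (S k) = Bk p (b1 k) (b2 k)"
    and "\<forall>k\<in>{2..n}. Bk p (b1 (n+2-k)) (b2 (n+2-k)) = image_mset cnj (Bk p (b1 k) (b2 k))"
    and "\<forall>k\<in>{1..n}. \<forall>i<p. \<forall>j<p.
           (let Lkij = (1 / of_nat n) * (\<Sum>l=1..n. complex_of_real (S l $$ (i, j)) *
                         inverse (cis (2*pi / real n)) ^ ((k-1)*(l-1)))
            in Im Lkij = 0 \<and> Re Lkij \<ge> 0)"
  shows "\<exists>A :: real mat. g_circulant_blocks p n g A \<and>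
           (\<forall>i<p*n. \<forall>j<p*n. A $$ (i, j) \<ge> 0) \<and>
           rspec A = (\<Sum>k\<in>{1..n}. Bk p (b1 k) (b2 k))"
proof -
  have p0: "p > 0" using prime_gt_0_nat[OF assms(1)] .
  have n0: "n > 0" using assms(3) by simp
  define w where "w = cis (2*pi / real n)"
  have wn: "w^n = 1" unfolding w_def by (rule w_n[OF n0])
  have orthw: "\<And>a b. a < n \<Longrightarrow> b < n \<Longrightarrow> (\<Sum>c<n. w^(a*c) * inverse w^(b*c)) = (if a = b then of_nat n else 0)"
    unfolding w_def by (rule orth[OF n0])
  have Sc: "S k \<in> carrier_mat p p" if "k \<in> {1..n}" for k
    using assms(7) that unfolding g_circulant_def by blast
  have Sspec: "rspec (S k) = Bk p (b1 k) (b2 k)" if "k \<in> {1..n}" for k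
    using assms(7) that by blast
  define T where "T = (\<lambda>b. map_mat complex_of_real (S (Suc b)))"
  have Tc: "T b \<in> carrier_mat p p" if "b < n" for b
    using Sc[of "Suc b"] that by (simp add: T_def)
  define Lc where "Lc = (\<lambda>k i j. (1 / of_nat n) * (\<Sum>l=1..n. complex_of_real (S l $$ (i, j)) *
                         inverse w ^ ((k-1)*(l-1))) :: complex)"
  have hL: "\<forall>k\<in>{1..n}. \<forall>i<p. \<forall>j<p. Im (Lc k i j) = 0 \<and> Re (Lc k i j) \<ge> 0"
    using assms(9) unfolding Lc_def w_def Let_def by blast
  define kk where "kk = (\<lambda>x y. (y mod n + n - x mod n) mod n + 1)"
  have kk1: "kk x y \<in> {1..n}" for x y using n0 by (simp add: kk_def Suc_le_eq)
  define A where "A = mat (p*n) (p*n) (\<lambda>(x,y). Re (Lc (kk x y) (x div n) (y div n)))"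
  have entry: "(Pm n p w * blockdiag p T n * Qm n p w) $$ (x,y) = Lc (kk x y) (x div n) (y div n)"
    if x: "x < p*n" and y: "y < p*n" for x y
  proof -
    have xm: "x mod n < n" using divmod_facts[OF x] by simp
    have "(Pm n p w * blockdiag p T n * Qm n p w) $$ (x,y) =
      (\<Sum>b<n. w^((x mod n)*b) * T b $$ (x div n, y div n) * inverse w^((y mod n)*b)) / of_nat n"
      by (rule PDQ[OF n0 p0 x y])
    also have "\<dots> = (\<Sum>b<n. complex_of_real (S (Suc b) $$ (x div n, y div n)) * inverse w^(((y mod n + n - x mod n) mod n)*b)) / of_nat n"
    proof (rule arg_cong[where f="\<lambda>s. s / of_nat n"], rule sum.cong[OF refl])
      fix b assume b: "b \<in> {..<n}"
      have Tb: "T b $$ (x div n, y div n) = complex_of_real (S (Suc b) $$ (x div n, y div n))"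
        using Sc[of "Suc b"] b divmod_facts[OF x] divmod_facts[OF y] by (simp add: T_def)
      have "w^((x mod n)*b) * T b $$ (x div n, y div n) * inverse w^((y mod n)*b)
          = T b $$ (x div n, y div n) * (w^((x mod n)*b) * inverse w^((y mod n)*b))"
        by (simp only: ac_simps)
      also have "\<dots> = T b $$ (x div n, y div n) * inverse w^(((y mod n + n - x mod n) mod n)*b)"
        by (simp only: expo[OF n0 wn xm])
      finally show "w^((x mod n)*b) * T b $$ (x div n, y div n) * inverse w^((y mod n)*b)
          = complex_of_real (S (Suc b) $$ (x div n, y div n)) * inverse w^(((y mod n + n - x mod n) mod n)*b)"
        unfolding Tb .
    qed
    also have "\<dots> = Lc (kk x y) (x div n) (y div n)"
      unfolding Lc_def kk_def sum_shift1 by simp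
    finally show ?thesis .
  qed
  have mapA: "map_mat complex_of_real A = Pm n p w * blockdiag p T n * Qm n p w"
  proof (rule eq_matI)
    fix x y assume "x < dim_row (Pm n p w * blockdiag p T n * Qm n p w)"
      "y < dim_col (Pm n p w * blockdiag p T n * Qm n p w)"
    then have x: "x < p*n" and y: "y < p*n" by (simp_all add: Pm_def Qm_def)
    have ij: "x div n < p" "y div n < p" using divmod_facts[OF x] divmod_facts[OF y] by simp_all
    have "map_mat complex_of_real A $$ (x,y) = complex_of_real (Re (Lc (kk x y) (x div n) (y div n)))"
      using x y by (simp add: A_def)
    also have "\<dots> = Lc (kk x y) (x div n) (y div n)"
      using hL kk1[of x y] ij by (intro complex_eqI) simp_all
    also have "\<dots> = (Pm n p w * blockdiag p T n * Qm n p w) $$ (x,y)"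
      using entry[OF x y] by simp
    finally show "map_mat complex_of_real A $$ (x,y) = (Pm n p w * blockdiag p T n * Qm n p w) $$ (x,y)" .
  qed (simp_all add: A_def Pm_def Qm_def)
  have sim: "similar_mat (map_mat complex_of_real A) (blockdiag p T n)"
  proof (rule similar_matI[where n="p*n" and P="Pm n p w" and Q="Qm n p w"])
    show "{map_mat complex_of_real A, blockdiag p T n, Pm n p w, Qm n p w} \<subseteq> carrier_mat (p*n) (p*n)"
      using blockdiag_carrier[of p T n] by (auto simp: A_def Pm_def Qm_def mult.commute)
    show "Pm n p w * Qm n p w = 1\<^sub>m (p*n)" by (rule PQ[OF n0 p0 orthw])
    show "Qm n p w * Pm n p w = 1\<^sub>m (p*n)" by (rule QP[OF n0 p0 orthw])
    show "map_mat complex_of_real A = Pm n p w * blockdiag p T n * Qm n p w" by (rule mapA)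
  qed
  have cpnz: "char_poly (T b) \<noteq> 0" if "b < n" for b
  proof
    assume "char_poly (T b) = 0"
    with degree_monic_char_poly[OF Tc[OF that]] show False by simp
  qed
  have "rspec A = proots (char_poly (blockdiag p T n))"
    unfolding rspec_def spec_mset_def using char_poly_similar[OF sim] by simp
  also have "\<dots> = proots (\<Prod>b<n. char_poly (T b))"
    using char_poly_blockdiag[OF p0 Tc] by simp
  also have "\<dots> = (\<Sum>b<n. proots (char_poly (T b)))"
    by (rule proots_prod) (use cpnz in auto)
  also have "\<dots> = (\<Sum>b<n. Bk p (b1 (Suc b)) (b2 (Suc b)))"
  proof (rule sum.cong[OF refl])
    fix b assume "b \<in> {..<n}"
    then have "Suc b \<in> {1..n}" by auto
    then show "proots (char_poly (T b)) = Bk p (b1 (Suc b)) (b2 (Suc b))"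
      using Sspec[of "Suc b"] unfolding rspec_def spec_mset_def T_def by simp
  qed
  also have "\<dots> = (\<Sum>k\<in>{1..n}. Bk p (b1 k) (b2 k))"
    by (rule sum_shift1[symmetric])
  finally have spec: "rspec A = (\<Sum>k\<in>{1..n}. Bk p (b1 k) (b2 k))" .
  have nonneg: "\<forall>i<p*n. \<forall>j<p*n. A $$ (i, j) \<ge> 0"
  proof (intro allI impI)
    fix x y assume x: "x < p*n" and y: "y < p*n"
    have ij: "x div n < p" "y div n < p" using divmod_facts[OF x] divmod_facts[OF y] by simp_all
    show "A $$ (x, y) \<ge> 0" using x y hL kk1[of x y] ij by (simp add: A_def)
  qed
  have Sper: "S l $$ ((i+1) mod p, (j+g) mod p) = S l $$ (i, j)"
    if l: "l \<in> {1..n}" and i: "i < p" and j: "j < p" for l i j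
  proof -
    obtain f where f: "\<forall>i<p. \<forall>j<p. S l $$ (i, j) = f (nat ((int j - int i * int g) mod int p))"
      using assms(7) l unfolding g_circulant_def by blast
    have "S l $$ ((i+1) mod p, (j+g) mod p) = f (nat ((int ((j+g) mod p) - int ((i+1) mod p) * int g) mod int p))"
      using f p0 by simp
    also have "\<dots> = f (nat ((int j - int i * int g) mod int p))" by (simp only: circ_idx)
    also have "\<dots> = S l $$ (i, j)" using f i j by simp
    finally show ?thesis .
  qed
  have Lper: "Lc k ((i+1) mod p) ((j+g) mod p) = Lc k i j" if "i < p" "j < p" for k i j
    unfolding Lc_def using Sper that by (intro arg_cong[where f="\<lambda>s. _ * s"] sum.cong refl) auto
  have blocks: "g_circulant_blocks p n g A"
    unfolding g_circulant_blocks_def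
  proof (intro conjI allI impI)
    show "A \<in> carrier_mat (p*n) (p*n)" by (simp add: A_def)
    fix i j a b assume i: "i < p" and j: "j < p" and a: "a < n" and b: "b < n"
    have i': "(i+1) mod p < p" and j': "(j+g) mod p < p" using p0 by simp_all
    note I1 = idx_facts[OF i' a] and I2 = idx_facts[OF j' b] and I3 = idx_facts[OF i a] and I4 = idx_facts[OF j b]
    have "A $$ (((i+1) mod p) * n + a, ((j+g) mod p) * n + b) = Re (Lc (kk (i*n+a) (j*n+b)) ((i+1) mod p) ((j+g) mod p))"
      using I1 I2 I3 I4 by (simp add: A_def kk_def)
    also have "\<dots> = Re (Lc (kk (i*n+a) (j*n+b)) i j)" using Lper[OF i j] by simp
    also have "\<dots> = A $$ (i*n + a, j*n + b)" using I3 I4 by (simp add: A_def)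
    finally show "A $$ (((i+1) mod p) * n + a, ((j+g) mod p) * n + b) = A $$ (i*n + a, j*n + b)" .
  qed
  show ?thesis using blocks nonneg spec by blast
qed

end
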